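(* Consider an instance $(f,V,B)$ and run the main loop of Algorithm $\mathsf{LA}$ (described in the context). Let $X$ and $Y$ be the two sets at the end of the main loop, and let $O_1$ be an optimal solution of the problem restricted to $V_1$, i.e. $O_1\in\arg\max\{f(S): S\subseteq V_1,\ c(S)\le B\}$. Then $$f(O_1)\le 3\big(f(X)+f(Y)\big).$$
   Context: Setting: $V$ is a finite ground set of size $n$. $f:2^V\to\mathbb{R}_{\ge 0}$ is a non-negative submodular set function with $f(\emptyset)=0$. Submodular means $f(A\cup\{e\})-f(A)\ge f(B'\cup\{e\})-f(B')$ for all $A\subseteq B'\subseteq V$ and $e\in V\setminus B'$. Each $e\in V$ has a cost $c(e)>0$, and $c(S)=\sum_{e\in S}c(e)$. $B>0$ is a budget, and $c(e)\le B$ for every $e\in V$. The notation $f(e\mid S)=f(S\cup\{e\})-f(S)$ is used throughout. Algorithm $\mathsf{LA}$ on $(f,V,B)$ runs as follows. 1. Set $V_1=\{e\in V: c(e)\le B/2\}$ and $X=Y=\emptyset$. Let $e_{\max}\in\arg\max_{e\in V}f(e)$. 2. Main loop: process each $e\in V_1$ once, in an arbitrary fixed order. Among the sets $Z\in\{X,Y\}$ satisfying $f(e\mid Z)/c(e)\ge f(Z)/B$, choose one maximizing $f(e\mid Z)/c(e)$, breaking ties arbitrarily. If such a $Z$ exists, add $e$ to $Z$. 3. After the loop, for $T\in\{X,Y\}$ let $T(j)$ denote the set of the last $j$ elements added to $T$. Let $X'$ be the set $X(j)$ of largest cost among those with $0\le j\le|X|$ and $c(X(j))\le B$. Define $Y'$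 from $Y$ in the same way. 4. Return the set $S$ among $X'$, $Y'$ and $\{e_{\max}\}$ with the largest $f$ value. *)

theory Defs
  imports Complex_Main
begin

definition marg :: "('a set \<Rightarrow> real) \<Rightarrow> 'a \<Rightarrow> 'a set \<Rightarrow> real" where
  "marg f e S = f (S \<union> {e}) - f S"

definition submodular_on :: "'a set \<Rightarrow> ('a set \<Rightarrow> real) \<Rightarrow> bool" where
  "submodular_on V f \<longleftrightarrow>
     (\<forall>A B'. A \<subseteq> B' \<and> B' \<subseteq> V \<longrightarrow>
        (\<forall>e \<in> V - B'. f (A \<union> {e}) - f A \<ge> f (B' \<union> {e}) - f B'))"

definition cost :: "('a \<Rightarrow> real) \<Rightarrow> 'a set \<Rightarrow> real" where
  "cost c S = (\<Sum>e\<in>S. c e)"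

definition la_ok :: "('a set \<Rightarrow> real) \<Rightarrow> ('a \<Rightarrow> real) \<Rightarrow> real \<Rightarrow> 'a \<Rightarrow> 'a set \<Rightarrow> bool" where
  "la_ok f c B e Z \<longleftrightarrow> marg f e Z / c e \<ge> f Z / B"

text \<open>One iteration of the main loop processing element e, as a relation on states (X,Y);
  tie-breaking is arbitrary, so every admissible choice is allowed.\<close>
inductive la_step :: "('a set \<Rightarrow> real) \<Rightarrow> ('a \<Rightarrow> real) \<Rightarrow> real \<Rightarrow> 'a
    \<Rightarrow> 'a set \<times> 'a set \<Rightarrow> 'a set \<times> 'a set \<Rightarrow> bool" for f c B e where
  addX: "la_ok f c B e X \<Longrightarrow>
         (la_ok f c B e Y \<longrightarrow> marg f e X / c e \<ge> marg f e Y / c e) \<Longrightarrow>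
         la_step f c B e (X, Y) (insert e X, Y)"
| addY: "la_ok f c B e Y \<Longrightarrow>
         (la_ok f c B e X \<longrightarrow> marg f e Y / c e \<ge> marg f e X / c e) \<Longrightarrow>
         la_step f c B e (X, Y) (X, insert e Y)"
| skip: "\<not> la_ok f c B e X \<Longrightarrow> \<not> la_ok f c B e Y \<Longrightarrow>
         la_step f c B e (X, Y) (X, Y)"

inductive la_run :: "('a set \<Rightarrow> real) \<Rightarrow> ('a \<Rightarrow> real) \<Rightarrow> real \<Rightarrow> 'a list
    \<Rightarrow> 'a set \<times> 'a set \<Rightarrow> 'a set \<times> 'a set \<Rightarrow> bool" for f c B where
  Nil: "la_run f c B [] s s"
| Cons: "la_step f c B e s s' \<Longrightarrow> la_run f c B es s' s'' \<Longrightarrow> la_run f c B (e # es) s s''"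

end

theory Submission
  imports Defs
begin

context
  fixes V :: "'a set" and f :: "'a set \<Rightarrow> real" and c :: "'a \<Rightarrow> real" and B :: real
  assumes nonneg: "\<And>S. S \<subseteq> V \<Longrightarrow> f S \<ge> 0"
    and submod: "submodular_on V f"
    and cpos: "\<And>e. e \<in> V \<Longrightarrow> c e > 0"
    and Bpos: "B > 0"
begin

lemma dr: "A \<subseteq> C \<Longrightarrow> C \<subseteq> V \<Longrightarrow> e \<in> V \<Longrightarrow> e \<notin> C \<Longrightarrow> marg f e C \<le> marg f e A"
  using submod unfolding submodular_on_def marg_def by blast

lemma ok_ge: "la_ok f c B e Z \<Longrightarrow> e \<in> V \<Longrightarrow> c e * f Z / B \<le> marg f e Z"
proof -
  assume a: "la_ok f c B e Z" and e: "e \<in> V"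
  have ce: "c e > 0" using cpos e by auto
  from a have "f Z / B \<le> marg f e Z / c e" unfolding la_ok_def by simp
  thus ?thesis using ce Bpos by (simp add: field_simps)
qed

lemma nok_lt: "\<not> la_ok f c B e Z \<Longrightarrow> e \<in> V \<Longrightarrow> marg f e Z < c e * f Z / B"
proof -
  assume a: "\<not> la_ok f c B e Z" and e: "e \<in> V"
  have ce: "c e > 0" using cpos e by auto
  from a have "marg f e Z / c e < f Z / B" unfolding la_ok_def by simp
  thus ?thesis using ce Bpos by (simp add: field_simps)
qed

lemma cmp_ge: "e \<in> V \<Longrightarrow> marg f e Y / c e \<le> marg f e X / c e \<Longrightarrow> marg f e Y \<le> marg f e X"
  using cpos by (simp add: divide_le_cancel)

lemma ok_mono: "la_ok f c B e Z \<Longrightarrow> Z \<subseteq> V \<Longrightarrow> e \<in> V \<Longrightarrow> f Z \<le> f (insert e Z)"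
proof -
  assume a: "la_ok f c B e Z" "Z \<subseteq> V" "e \<in> V"
  have "0 \<le> c e * f Z / B" using nonneg[OF a(2)] cpos[OF a(3)] Bpos by simp
  also have "\<dots> \<le> marg f e Z" using ok_ge a by blast
  finally show ?thesis unfolding marg_def by simp
qed

lemma run_props:
  "la_run f c B es s t \<Longrightarrow> set es \<subseteq> V \<Longrightarrow> distinct es \<Longrightarrow> fst s \<subseteq> V \<Longrightarrow> snd s \<subseteq> V
   \<Longrightarrow> set es \<inter> (fst s \<union> snd s) = {} \<Longrightarrow>
   fst s \<subseteq> fst t \<and> snd s \<subseteq> snd t \<and> fst t \<subseteq> fst s \<union> set es \<and> snd t \<subseteq> snd s \<union> set es
   \<and> f (fst s) \<le> f (fst t) \<and> f (snd s) \<le> f (snd t) \<and> (fst t - fst s) \<inter> (snd t - snd s) = {}"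
proof (induction rule: la_run.induct)
  case (Nil s)
  then show ?case by auto
next
  case (Cons e s s' es s'')
  from Cons.hyps(1) show ?case
  proof (cases rule: la_step.cases)
    case (addX X Y)
    have m: "f X \<le> f (insert e X)" using ok_mono addX Cons.prems by auto
    have pr: "set es \<subseteq> V" "distinct es" "fst s' \<subseteq> V" "snd s' \<subseteq> V" "set es \<inter> (fst s' \<union> snd s') = {}"
      using Cons.prems addX by auto
    note IH = Cons.IH[OF pr]
    show ?thesis using IH m addX Cons.prems by auto
  next
    case (addY Y X)
    have m: "f Y \<le> f (insert e Y)" using ok_mono addY Cons.prems by auto
    have pr: "set es \<subseteq> V" "distinct es" "fst s' \<subseteq> V" "snd s' \<subseteq> V" "set es \<inter> (fst s' \<union> snd s') = {}"
      using Cons.prems addY by auto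
    note IH = Cons.IH[OF pr]
    show ?thesis using IH m addY Cons.prems by auto
  next
    case (skip X Y)
    have pr: "set es \<subseteq> V" "distinct es" "fst s' \<subseteq> V" "snd s' \<subseteq> V" "set es \<inter> (fst s' \<union> snd s') = {}"
      using Cons.prems skip by auto
    note IH = Cons.IH[OF pr]
    show ?thesis using IH skip Cons.prems by auto
  qed
qed

lemma run_bound:
  "la_run f c B es s t \<Longrightarrow> set es \<subseteq> V \<Longrightarrow> distinct es \<Longrightarrow> fst s \<subseteq> V \<Longrightarrow> snd s \<subseteq> V
   \<Longrightarrow> set es \<inter> (fst s \<union> snd s) = {} \<Longrightarrow>
   (\<Sum>x\<in>Q \<inter> set es. (if x \<in> fst t then 0 else marg f x (fst t)) + (if x \<in> snd t then 0 else marg f x (snd t)))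
   \<le> cost c (Q \<inter> set es) * (f (fst t) + f (snd t)) / B + (f (fst t) - f (fst s)) + (f (snd t) - f (snd s))"
proof (induction rule: la_run.induct)
  case (Nil s)
  then show ?case by (simp add: cost_def)
next
  case (Cons e s s' es s'')
  define X where "X = fst s''"
  define Y where "Y = snd s''"
  define h where "h = (\<lambda>x. (if x \<in> X then 0 else marg f x X) + (if x \<in> Y then 0 else marg f x Y))"
  define S where "S = f X + f Y"
  have eV: "e \<in> V" and ce: "c e > 0" using Cons.prems cpos by auto
  have enot: "e \<notin> set es" using Cons.prems by auto
  have pr: "set es \<subseteq> V" "distinct es" "fst s' \<subseteq> V" "snd s' \<subseteq> V" "set es \<inter> (fst s' \<union> snd s') = {}"
    using Cons.prems Cons.hyps(1) by (auto elim!: la_step.cases)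
  note IH = Cons.IH[OF pr, folded X_def Y_def]
  note P = run_props[OF Cons.hyps(2) pr, folded X_def Y_def]
  have XV: "X \<subseteq> V" "Y \<subseteq> V" using P pr by auto
  have S0: "S \<ge> 0" using nonneg XV S_def by (simp add: add_nonneg_nonneg)
  have fin: "finite (Q \<inter> set es)" by simp
  have cm: "\<And>a b. a \<le> b \<Longrightarrow> c e * a / B \<le> c e * b / B"
    using ce Bpos by (simp add: divide_right_mono mult_left_mono)
  have fX0: "f X \<ge> 0" "f Y \<ge> 0" using nonneg XV by auto
  have cS0: "c e * S / B \<ge> 0" using ce Bpos S0 by simp
  have key: "(if e \<in> Q then h e else 0) \<le> (if e \<in> Q then c e * S / B else 0)
      + (f (fst s') - f (fst s)) + (f (snd s') - f (snd s))"
    using Cons.hyps(1)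
  proof (cases rule: la_step.cases)
    case (addX X0 Y0)
    have sub: "Y0 \<subseteq> Y" "e \<in> X" "e \<notin> Y" "X0 \<subseteq> V" "Y0 \<subseteq> V"
      using P addX Cons.prems enot by auto
    have hY: "h e = marg f e Y" unfolding h_def using sub by simp
    have d: "marg f e Y \<le> marg f e Y0" using dr[of Y0 Y e] sub XV eV by auto
    have mono: "f X0 \<le> f (insert e X0)" using ok_mono addX sub eV by auto
    have "h e \<le> c e * S / B + (f (insert e X0) - f X0)"
    proof (cases "la_ok f c B e Y0")
      case True
      then have "marg f e Y0 \<le> marg f e X0" using addX cmp_ge eV by auto
      then show ?thesis using hY d cS0 unfolding marg_def by simp
    next
      case False
      have "marg f e Y0 < c e * f Y0 / B" using nok_lt False eV by auto
      also have "\<dots> \<le> c e * S / B" using cm P fX0 S_def addX by auto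
      finally show ?thesis using hY d mono by simp
    qed
    then show ?thesis using addX mono by auto
  next
    case (addY Y0 X0)
    have sub: "X0 \<subseteq> X" "e \<in> Y" "e \<notin> X" "X0 \<subseteq> V" "Y0 \<subseteq> V"
      using P addY Cons.prems enot by auto
    have hX: "h e = marg f e X" unfolding h_def using sub by simp
    have d: "marg f e X \<le> marg f e X0" using dr[of X0 X e] sub XV eV by auto
    have mono: "f Y0 \<le> f (insert e Y0)" using ok_mono addY sub eV by auto
    have "h e \<le> c e * S / B + (f (insert e Y0) - f Y0)"
    proof (cases "la_ok f c B e X0")
      case True
      then have "marg f e X0 \<le> marg f e Y0" using addY cmp_ge eV by auto
      then show ?thesis using hX d cS0 unfolding marg_def by simp
    next
      case False
      have "marg f e X0 < c e * f X0 / B" using nok_lt False eV by auto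
      also have "\<dots> \<le> c e * S / B" using cm P fX0 S_def addY by auto
      finally show ?thesis using hX d mono by simp
    qed
    then show ?thesis using addY mono by auto
  next
    case (skip X0 Y0)
    have sub: "X0 \<subseteq> X" "Y0 \<subseteq> Y" "e \<notin> X" "e \<notin> Y" "X0 \<subseteq> V" "Y0 \<subseteq> V"
      using P skip Cons.prems enot by auto
    have hh: "h e = marg f e X + marg f e Y" unfolding h_def using sub by simp
    have d1: "marg f e X \<le> marg f e X0" using dr[of X0 X e] sub XV eV by auto
    have d2: "marg f e Y \<le> marg f e Y0" using dr[of Y0 Y e] sub XV eV by auto
    have n1: "marg f e X0 < c e * f X0 / B" using nok_lt skip eV by auto
    have n2: "marg f e Y0 < c e * f Y0 / B" using nok_lt skip eV by auto
    have "c e * f X0 / B + c e * f Y0 / B = c e * (f X0 + f Y0) / B" by (simp add: algebra_simps add_divide_distrib)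
    also have "\<dots> \<le> c e * S / B" using cm P S_def skip by auto
    finally have "h e \<le> c e * S / B" using hh d1 d2 n1 n2 by linarith
    then show ?thesis using skip by auto
  qed
  have split_sum: "(\<Sum>x\<in>Q \<inter> set (e # es). h x) = (if e \<in> Q then h e else 0) + (\<Sum>x\<in>Q \<inter> set es. h x)"
    using enot by (auto simp: insert_absorb)
  have split_cost: "cost c (Q \<inter> set (e # es)) * S / B = (if e \<in> Q then c e * S / B else 0) + cost c (Q \<inter> set es) * S / B"
    using enot by (auto simp: cost_def add_divide_distrib distrib_right)
  have "(\<Sum>x\<in>Q \<inter> set (e # es). h x) \<le> cost c (Q \<inter> set (e # es)) * S / B + (f X - f (fst s)) + (f Y - f (snd s))"
    using split_sum split_cost key IH unfolding h_def S_def by linarith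
  then show ?case unfolding h_def S_def X_def Y_def .
qed

lemma L2: "finite T \<Longrightarrow> T \<subseteq> V \<Longrightarrow> A \<subseteq> V \<Longrightarrow>
   f (A \<union> T) \<le> f A + (\<Sum>t\<in>T. if t \<in> A then 0 else marg f t A)"
proof (induction T rule: finite_induct)
  case empty
  then show ?case by simp
next
  case (insert x T)
  show ?case
  proof (cases "x \<in> A")
    case True
    then have "A \<union> insert x T = A \<union> T" by auto
    then show ?thesis using insert True by simp
  next
    case False
    have "marg f x (A \<union> T) \<le> marg f x A" using dr[of A "A \<union> T" x] insert False by auto
    moreover have "f (A \<union> insert x T) = f (A \<union> T) + marg f x (A \<union> T)"
      unfolding marg_def by (simp add: insert_commute Un_insert_right)
    ultimately show ?thesis using insert False by simp
  qed
qed

lemma L3: "finite T \<Longrightarrow> T \<subseteq> V \<Longrightarrow> A \<subseteq> C \<Longrightarrow> C \<subseteq> V \<Longrightarrow> T \<inter> C = {} \<Longrightarrow>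
   f (C \<union> T) - f C \<le> f (A \<union> T) - f A"
proof (induction T rule: finite_induct)
  case empty
  then show ?case by simp
next
  case (insert x T)
  have "marg f x (C \<union> T) \<le> marg f x (A \<union> T)" using dr[of "A \<union> T" "C \<union> T" x] insert by auto
  then show ?case using insert unfolding marg_def by (simp add: Un_insert_right)
qed

end

theorem lemma2:
  fixes V :: "'a set" and f :: "'a set \<Rightarrow> real" and c :: "'a \<Rightarrow> real" and B :: real
    and order :: "'a list" and X Y O1 :: "'a set"
  assumes finV: "finite V"
    and nonneg: "\<And>S. S \<subseteq> V \<Longrightarrow> f S \<ge> 0"
    and f_empty: "f {} = 0"
    and submod: "submodular_on V f"
    and cpos: "\<And>e. e \<in> V \<Longrightarrow> c e > 0"
    and Bpos: "B > 0"
    and cle: "\<And>e. e \<in> V \<Longrightarrow> c e \<le> B"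
    and order: "distinct order" "set order = {e \<in> V. c e \<le> B / 2}"
    and run: "la_run f c B order ({}, {}) (X, Y)"
    and O1_feas: "O1 \<subseteq> {e \<in> V. c e \<le> B / 2}" "cost c O1 \<le> B"
    and O1_opt: "\<And>S. S \<subseteq> {e \<in> V. c e \<le> B / 2} \<Longrightarrow> cost c S \<le> B \<Longrightarrow> f S \<le> f O1"
  shows "f O1 \<le> 3 * (f X + f Y)"
proof -
  have sV: "set order \<subseteq> V" using order by auto
  have P: "X \<subseteq> set order" "Y \<subseteq> set order" "X \<inter> Y = {}"
    using run_props[OF nonneg submod cpos Bpos run sV order(1)] by auto
  have XV: "X \<subseteq> V" "Y \<subseteq> V" using P sV by auto
  have OV1: "O1 \<subseteq> V" using O1_feas by auto
  have OV: "O1 \<subseteq> V" "finite O1" using OV1 finV finite_subset by auto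
  have Oo: "O1 \<inter> set order = O1" using O1_feas order by auto
  define S where "S = f X + f Y"
  have S0: "S \<ge> 0" using nonneg XV S_def by (simp add: add_nonneg_nonneg)
  have RB: "(\<Sum>x\<in>O1. (if x \<in> X then 0 else marg f x X) + (if x \<in> Y then 0 else marg f x Y))
     \<le> cost c O1 * S / B + f X + f Y"
    using run_bound[OF nonneg submod cpos Bpos run sV order(1), of O1] unfolding prod.sel Oo f_empty S_def by simp
  have cb: "cost c O1 * S / B \<le> S"
  proof -
    have "cost c O1 * S \<le> B * S" using O1_feas(2) S0 by (simp add: mult_right_mono)
    thus ?thesis using Bpos by (simp add: pos_divide_le_eq mult.commute)
  qed
  have l2X: "f (X \<union> O1) \<le> f X + (\<Sum>t\<in>O1. if t \<in> X then 0 else marg f t X)"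
    using L2[OF nonneg submod cpos Bpos OV(2) OV(1) XV(1)] .
  have l2Y: "f (Y \<union> O1) \<le> f Y + (\<Sum>t\<in>O1. if t \<in> Y then 0 else marg f t Y)"
    using L2[OF nonneg submod cpos Bpos OV(2) OV(1) XV(2)] .
  have fT: "finite (Y - (O1 \<union> X))" using XV finV finite_subset by blast
  have l3: "f ((O1 \<union> X) \<union> (Y - (O1 \<union> X))) - f (O1 \<union> X) \<le> f (O1 \<union> (Y - (O1 \<union> X))) - f O1"
    by (rule L3[OF nonneg submod cpos Bpos fT]) (use XV OV in auto)
  have e1: "(O1 \<union> X) \<union> (Y - (O1 \<union> X)) = O1 \<union> X \<union> Y" by auto
  have e2: "O1 \<union> (Y - (O1 \<union> X)) = Y \<union> O1" using P by auto
  have nn: "f (O1 \<union> X \<union> Y) \<ge> 0" using nonneg XV OV by auto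
  have "f O1 \<le> f (X \<union> O1) + f (Y \<union> O1)" using l3 e1 e2 nn by (simp add: Un_commute)
  also have "\<dots> \<le> f X + f Y + (\<Sum>x\<in>O1. (if x \<in> X then 0 else marg f x X) + (if x \<in> Y then 0 else marg f x Y))"
    using l2X l2Y by (simp add: sum.distrib)
  finally have F: "f O1 \<le> S + (cost c O1 * S / B + S)" using RB unfolding S_def by linarith
  have G: "\<And>a T. a \<le> S + (T + S) \<Longrightarrow> T \<le> S \<Longrightarrow> a \<le> 3 * S" by linarith
  show ?thesis using G[OF F cb] unfolding S_def .
qed

end
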